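(* Let $d_G$ be a generalized distance on graphs (for example the shortest-path distance), and consider graphs with at most $n$ nodes. A Powerful Plain Graph Transformer (PPGT) whose graph positional encoding is given by $d_G$ is as powerful as the GD-WL test with distance $d_G$ in distinguishing non-isomorphic graphs, i.e., for every pair of graphs with at most $n$ nodes that GD-WL distinguishes there is a PPGT that distinguishes them, provided the functions $\phi$ and $\theta$ in its attention are chosen appropriately and the numbers of attention heads and layers are sufficiently large.
   Context: Graphs $G=(\mathcal V,\mathcal E)$ are finite. A generalized distance assigns to every pair of nodes $u,v$ of a graph $G$ a value $d_G(u,v)$ (e.g. shortest-path distance, resistance distance), invariant under graph isomorphism. GD-WL test: starting from initial node colors $\chi^0_G(v)$, iterate $\chi^{\ell}_G(v)=\mathrm{hash}(\{\!\{(d_G(v,u),\chi^{\ell-1}_G(u)) : u\in\mathcal V\}\!\})$, where $\{\!\{\cdot\}\!\}$ denotes a multiset and hash is injective; after $L$ iterations the graph color is the hash of the multiset $\{\!\{\chi^L_G(v): v\in\mathcal V\}\!\}$. GD-WL distinguishes two graphs if their graph colors differ. PPGT: each node $i$ is a token $x_i\in\mathbb R^D$ (initialized from node attributes), and each node pair $(i,j)$ carries a relative positional embedding $p_{ij}$ computed from the positional encoding (here from $d_G(i,j)$) by an MLP-based stem. Each layer is a pre-norm Transformer block: $\hat X = X + \mathrm{MSA}(\mathrm{Norm}(X),P)$, $X' = \hat X + \mathrm{MLP}(\mathrm{Norm}(\hat X))$, where MLP is a two-layer perceptron and Norm is a token-wise normalization. In each head $h$ of the multihead self-attention MSA, with queries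 $q_i=W_Q^h x_i$, keys $k_j=W_K^h x_j$, values $W_V^h x_j$, the attention weights are $\alpha_{ij}=\phi^h(p_{ij})\cdot \mathrm{Softmax}_j\big(\tfrac{q_i^\top k_j}{\sqrt D}-\tfrac{k_j^\top k_j}{2\sqrt D}+\theta^h(p_{ij})\big)$, with $\mathrm{Softmax}_j(a_{ij})=\exp(a_{ij})/\sum_{j'}\exp(a_{ij'})$ over all nodes $j'$ of the graph, and the head output at node $i$ is $\sum_j \alpha_{ij} W_O^h W_V^h x_j$; head outputs are summed/concatenated. A graph-level output is obtained by sum pooling of final node representations followed by an MLP. A PPGT distinguishes two graphs if its graph-level outputs differ. *)

theory Defs
  imports Complex_Main "HOL-Library.Multiset"
begin

record graph =
  gsize :: nat
  gadj  :: "nat \<Rightarrow> nat \<Rightarrow> bool"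
  gattr :: "nat \<Rightarrow> real list"

definition wf_graph :: "nat \<Rightarrow> graph \<Rightarrow> bool" where
  "wf_graph m G \<longleftrightarrow>
     (\<forall>i<gsize G. length (gattr G i) = m) \<and>
     (\<forall>i j. gadj G i j \<longrightarrow> i < gsize G \<and> j < gsize G) \<and>
     (\<forall>i j. gadj G i j \<longrightarrow> gadj G j i) \<and>
     (\<forall>i. \<not> gadj G i i)"

definition iso_via :: "(nat \<Rightarrow> nat) \<Rightarrow> graph \<Rightarrow> graph \<Rightarrow> bool" where
  "iso_via \<pi> G H \<longleftrightarrow>
     gsize G = gsize H \<and>
     bij_betw \<pi> {..<gsize G} {..<gsize H} \<and>
     (\<forall>i<gsize G. \<forall>j<gsize G. gadj H (\<pi> i) (\<pi> j) = gadj G i j) \<and>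
     (\<forall>i<gsize G. gattr H (\<pi> i) = gattr G i)"

definition gen_dist :: "nat \<Rightarrow> (graph \<Rightarrow> nat \<Rightarrow> nat \<Rightarrow> real) \<Rightarrow> bool" where
  "gen_dist m d \<longleftrightarrow>
     (\<forall>G H \<pi>. wf_graph m G \<and> wf_graph m H \<and> iso_via \<pi> G H \<longrightarrow>
        (\<forall>u<gsize G. \<forall>v<gsize G. d H (\<pi> u) (\<pi> v) = d G u v))"

text \<open>Colours are built with injective constructors, which plays the role of the injective hash.\<close>

datatype color = Init "real list" | Refine "(real \<times> color) multiset"

fun wl_color :: "(graph \<Rightarrow> nat \<Rightarrow> nat \<Rightarrow> real) \<Rightarrow> graph \<Rightarrow> nat \<Rightarrow> nat \<Rightarrow> color" where
  "wl_color d G 0 v = Init (gattr G v)"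
| "wl_color d G (Suc l) v =
     Refine (image_mset (\<lambda>u. (d G v u, wl_color d G l u)) (mset_set {..<gsize G}))"

definition wl_graph_color :: "(graph \<Rightarrow> nat \<Rightarrow> nat \<Rightarrow> real) \<Rightarrow> graph \<Rightarrow> nat \<Rightarrow> color multiset" where
  "wl_graph_color d G L = image_mset (wl_color d G L) (mset_set {..<gsize G})"

definition gdwl_distinguishes :: "(graph \<Rightarrow> nat \<Rightarrow> nat \<Rightarrow> real) \<Rightarrow> graph \<Rightarrow> graph \<Rightarrow> bool" where
  "gdwl_distinguishes d G H \<longleftrightarrow> (\<exists>L. wl_graph_color d G L \<noteq> wl_graph_color d H L)"

type_synonym vec = "nat \<Rightarrow> real"
type_synonym mat = "nat \<Rightarrow> nat \<Rightarrow> real"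

definition mv :: "nat \<Rightarrow> mat \<Rightarrow> vec \<Rightarrow> vec" where
  "mv n M v = (\<lambda>i. \<Sum>j<n. M i j * v j)"

definition dotp :: "nat \<Rightarrow> vec \<Rightarrow> vec \<Rightarrow> real" where
  "dotp n u v = (\<Sum>j<n. u j * v j)"

definition relu :: "vec \<Rightarrow> vec" where
  "relu v = (\<lambda>i. max 0 (v i))"

record mlp =
  m_hid :: nat
  m_W1  :: mat
  m_b1  :: vec
  m_W2  :: mat
  m_b2  :: vec

definition apply_mlp :: "nat \<Rightarrow> mlp \<Rightarrow> vec \<Rightarrow> vec" where
  "apply_mlp n M x =
     (\<lambda>i. mv (m_hid M) (m_W2 M) (relu (\<lambda>k. mv n (m_W1 M) x k + m_b1 M k)) i + m_b2 M i)"

definition layernorm :: "nat \<Rightarrow> real \<Rightarrow> vec \<Rightarrow> vec \<Rightarrow> vec \<Rightarrow> vec" where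
  "layernorm D eps g b x =
     (let mu = (\<Sum>c<D. x c) / real D;
          var = (\<Sum>c<D. (x c - mu)^2) / real D
      in (\<lambda>c. g c * (x c - mu) / sqrt (var + eps) + b c))"

record layer =
  WQ :: "nat \<Rightarrow> mat"
  WK :: "nat \<Rightarrow> mat"
  WV :: "nat \<Rightarrow> mat"
  WO :: "nat \<Rightarrow> mat"
  phi :: "nat \<Rightarrow> vec \<Rightarrow> real"
  theta :: "nat \<Rightarrow> vec \<Rightarrow> real"
  n1g :: vec
  n1b :: vec
  n2g :: vec
  n2b :: vec
  ffn :: mlp

record ppgt =
  dim :: nat
  pdim :: nat
  nheads :: nat
  nlayers :: nat
  eps :: real
  Win :: mat
  bin :: vec
  stem :: mlp
  layers :: "nat \<Rightarrow> layer"
  readout :: mlp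
  outdim :: nat

definition pos_emb :: "ppgt \<Rightarrow> (graph \<Rightarrow> nat \<Rightarrow> nat \<Rightarrow> real) \<Rightarrow> graph \<Rightarrow> nat \<Rightarrow> nat \<Rightarrow> vec" where
  "pos_emb P d G i j = apply_mlp 1 (stem P) (\<lambda>_. d G i j)"

definition init_tokens :: "nat \<Rightarrow> ppgt \<Rightarrow> graph \<Rightarrow> nat \<Rightarrow> vec" where
  "init_tokens m P G i = (\<lambda>c. (\<Sum>j<m. Win P c j * (gattr G i ! j)) + bin P c)"

definition att_weight :: "ppgt \<Rightarrow> layer \<Rightarrow> nat \<Rightarrow> (nat \<Rightarrow> nat \<Rightarrow> vec) \<Rightarrow> nat \<Rightarrow> (nat \<Rightarrow> vec) \<Rightarrow> nat \<Rightarrow> nat \<Rightarrow> real" where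
  "att_weight P Lr h p k Y i j =
     (let D = dim P;
          q = (\<lambda>a. mv D (WQ Lr h) (Y a));
          kk = (\<lambda>a. mv D (WK Lr h) (Y a));
          score = (\<lambda>a. dotp D (q i) (kk a) / sqrt (real D)
                       - dotp D (kk a) (kk a) / (2 * sqrt (real D))
                       + theta Lr h (p i a))
      in phi Lr h (p i j) * (exp (score j) / (\<Sum>j'<k. exp (score j'))))"

definition msa :: "ppgt \<Rightarrow> layer \<Rightarrow> (nat \<Rightarrow> nat \<Rightarrow> vec) \<Rightarrow> nat \<Rightarrow> (nat \<Rightarrow> vec) \<Rightarrow> nat \<Rightarrow> vec" where
  "msa P Lr p k Y i =
     (\<lambda>c. \<Sum>h<nheads P. \<Sum>j<k.
            att_weight P Lr h p k Y i j * mv (dim P) (WO Lr h) (mv (dim P) (WV Lr h) (Y j)) c)"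

definition block :: "ppgt \<Rightarrow> layer \<Rightarrow> (nat \<Rightarrow> nat \<Rightarrow> vec) \<Rightarrow> nat \<Rightarrow> (nat \<Rightarrow> vec) \<Rightarrow> (nat \<Rightarrow> vec)" where
  "block P Lr p k X =
     (let D = dim P;
          Y = (\<lambda>i. layernorm D (eps P) (n1g Lr) (n1b Lr) (X i));
          Xh = (\<lambda>i c. X i c + msa P Lr p k Y i c)
      in (\<lambda>i c. Xh i c + apply_mlp D (ffn Lr) (layernorm D (eps P) (n2g Lr) (n2b Lr) (Xh i)) c))"

fun tokens :: "nat \<Rightarrow> ppgt \<Rightarrow> (graph \<Rightarrow> nat \<Rightarrow> nat \<Rightarrow> real) \<Rightarrow> graph \<Rightarrow> nat \<Rightarrow> nat \<Rightarrow> vec" where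
  "tokens m P d G 0 = init_tokens m P G"
| "tokens m P d G (Suc l) = block P (layers P l) (pos_emb P d G) (gsize G) (tokens m P d G l)"

definition ppgt_output :: "nat \<Rightarrow> ppgt \<Rightarrow> (graph \<Rightarrow> nat \<Rightarrow> nat \<Rightarrow> real) \<Rightarrow> graph \<Rightarrow> vec" where
  "ppgt_output m P d G =
     apply_mlp (dim P) (readout P) (\<lambda>c. \<Sum>i<gsize G. tokens m P d G (nlayers P) i c)"

definition valid_ppgt :: "ppgt \<Rightarrow> bool" where
  "valid_ppgt P \<longleftrightarrow> 0 < eps P"

definition ppgt_distinguishes :: "nat \<Rightarrow> (graph \<Rightarrow> nat \<Rightarrow> nat \<Rightarrow> real) \<Rightarrow> ppgt \<Rightarrow> graph \<Rightarrow> graph \<Rightarrow> bool" where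
  "ppgt_distinguishes m d P G H \<longleftrightarrow>
     (\<exists>c<outdim P. ppgt_output m P d G c \<noteq> ppgt_output m P d H c)"

end

theory Submission
  imports Defs
begin

lemma proj_exists:
  fixes S :: "vec set"
  assumes "finite S"
  shows "\<exists>w. \<forall>x\<in>S. \<forall>y\<in>S. (\<Sum>c<D. w c * x c) = (\<Sum>c<D. w c * y c) \<longrightarrow> (\<forall>c<D. x c = y c)"
proof (induction D)
  case 0
  then show ?case by auto
next
  case (Suc D)
  then obtain w where w: "\<forall>x\<in>S. \<forall>y\<in>S. (\<Sum>c<D. w c * x c) = (\<Sum>c<D. w c * y c) \<longrightarrow> (\<forall>c<D. x c = y c)"
    by blast
  define Bad where "Bad = (\<lambda>(x,y). (\<Sum>c<D. w c * (y c - x c)) / (x D - y D)) ` (S \<times> S)"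
  have "finite Bad" unfolding Bad_def using assms by auto
  then obtain v :: real where v: "v \<notin> Bad" using ex_new_if_finite infinite_UNIV_char_0 by blast
  show ?case
  proof (intro exI ballI impI allI)
    fix x y c assume xS: "x \<in> S" and yS: "y \<in> S"
      and eq: "(\<Sum>c<Suc D. (w(D := v)) c * x c) = (\<Sum>c<Suc D. (w(D := v)) c * y c)" and c: "c < Suc D"
    have e1: "(\<Sum>c<Suc D. (w(D := v)) c * z c) = (\<Sum>c<D. w c * z c) + v * z D" for z
      by (simp add: lessThan_Suc)
    have eq2: "(\<Sum>c<D. w c * x c) + v * x D = (\<Sum>c<D. w c * y c) + v * y D"
      using eq e1 by metis
    have xD: "x D = y D"
    proof (rule ccontr)
      assume ne: "x D \<noteq> y D"
      have "(\<Sum>c<D. w c * (y c - x c)) = (\<Sum>c<D. w c * y c) - (\<Sum>c<D. w c * x c)"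
        by (simp add: algebra_simps sum_subtractf)
      also have "\<dots> = v * (x D - y D)" using eq2 by (simp add: algebra_simps)
      finally have "v = (\<Sum>c<D. w c * (y c - x c)) / (x D - y D)" using ne by simp
      then have "v \<in> Bad" unfolding Bad_def using xS yS by force
      with v show False by simp
    qed
    then have "(\<Sum>c<D. w c * x c) = (\<Sum>c<D. w c * y c)" using eq2 by simp
    then have "\<forall>c<D. x c = y c" using w xS yS by blast
    then show "x c = y c" using c xD less_Suc_eq by auto
  qed
qed

lemma interp1:
  fixes T :: "real set" and g :: "real \<Rightarrow> vec"
  assumes "finite T"
  shows "\<exists>(K::nat) \<tau> a b0. \<forall>t\<in>T. \<forall>c. b0 c + (\<Sum>k<K. a k c * max 0 (t - \<tau> k)) = g t c"
  using assms
proof (induction T rule: finite_linorder_max_induct)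
  case empty
  then show ?case by auto
next
  case (insert t0 A)
  show ?case
  proof (cases "A = {}")
    case True
    show ?thesis by (rule exI[of _ 0], rule exI, rule exI, rule exI[of _ "g t0"]) (auto simp: True)
  next
    case False
    from insert obtain K :: nat and \<tau> a b0 where IH: "\<forall>t\<in>A. \<forall>c. b0 c + (\<Sum>k<K. a k c * max 0 (t - \<tau> k)) = g t c"
      by blast
    define tm where "tm = Max A"
    have tmA: "tm \<in> A" using False insert(1) tm_def by simp
    have tm0: "tm < t0" using tmA insert(2) by blast
    have le: "t \<le> tm" if "t \<in> A" for t using that insert(1) tm_def by simp
    define f where "f c = b0 c + (\<Sum>k<K. a k c * max 0 (t0 - \<tau> k))" for c
    define a' where "a' = a(K := (\<lambda>c. (g t0 c - f c) / (t0 - tm)))"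
    define \<tau>' where "\<tau>' = \<tau>(K := tm)"
    have s: "(\<Sum>k<Suc K. a' k c * max 0 (t - \<tau>' k)) = (\<Sum>k<K. a k c * max 0 (t - \<tau> k)) + a' K c * max 0 (t - tm)" for t c
      by (simp add: lessThan_Suc a'_def \<tau>'_def)
    show ?thesis
    proof (intro exI ballI allI)
      fix t c assume "t \<in> insert t0 A"
      then consider "t = t0" | "t \<in> A" by blast
      then show "b0 c + (\<Sum>k<Suc K. a' k c * max 0 (t - \<tau>' k)) = g t c"
      proof cases
        case 1
        have "a' K c * max 0 (t0 - tm) = g t0 c - f c" using tm0 by (simp add: a'_def)
        then show ?thesis using 1 s by (simp add: f_def)
      next
        case 2
        then show ?thesis using s IH le[OF 2] by simp
      qed
    qed
  qed
qed

lemma mlp_interp: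
  fixes Idx :: "'i set" and x f :: "'i \<Rightarrow> vec"
  assumes fin: "finite Idx"
    and wd: "\<forall>i\<in>Idx. \<forall>j\<in>Idx. (\<forall>c<D. x i c = x j c) \<longrightarrow> f i = f j"
  shows "\<exists>M. \<forall>i\<in>Idx. apply_mlp D M (x i) = f i"
proof -
  obtain w where w: "\<forall>u\<in>x ` Idx. \<forall>v\<in>x ` Idx. (\<Sum>c<D. w c * u c) = (\<Sum>c<D. w c * v c) \<longrightarrow> (\<forall>c<D. u c = v c)"
    using proj_exists[of "x ` Idx" D] fin by blast
  define pr where "pr i = (\<Sum>c<D. w c * x i c)" for i
  define g where "g t = f (SOME i. i \<in> Idx \<and> pr i = t)" for t
  obtain K :: nat and \<tau> a b0 where ip: "\<forall>t\<in>pr ` Idx. \<forall>c. b0 c + (\<Sum>k<K. a k c * max 0 (t - \<tau> k)) = g t c"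
    using interp1[of "pr ` Idx" g] fin by blast
  define M where "M = \<lparr>m_hid = K, m_W1 = (\<lambda>k c. w c), m_b1 = (\<lambda>k. - \<tau> k), m_W2 = (\<lambda>c k. a k c), m_b2 = b0\<rparr>"
  have gi: "g (pr i) = f i" if "i \<in> Idx" for i
  proof -
    have ex: "\<exists>j. j \<in> Idx \<and> pr j = pr i" using that by blast
    define j where "j = (SOME j. j \<in> Idx \<and> pr j = pr i)"
    have j: "j \<in> Idx" "pr j = pr i" using someI_ex[OF ex] j_def by auto
    then have "\<forall>c<D. x j c = x i c" using w that unfolding pr_def by blast
    then have "f j = f i" using wd j that by blast
    then show ?thesis unfolding g_def j_def by simp
  qed
  show ?thesis
  proof (intro exI ballI ext)
    fix i c assume i: "i \<in> Idx"
    have "apply_mlp D M (x i) c = b0 c + (\<Sum>k<K. a k c * max 0 (pr i - \<tau> k))"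
      unfolding apply_mlp_def M_def mv_def relu_def pr_def by (simp add: sum_distrib_left mult.commute add.commute)
    also have "\<dots> = f i c" using ip i gi by auto
    finally show "apply_mlp D M (x i) c = f i c" .
  qed
qed

lemma ln_eval: "layernorm D e (\<lambda>_. 1) (\<lambda>_. 0) x c =
   (x c - (\<Sum>c<D. x c) / real D) / sqrt ((\<Sum>c<D. (x c - (\<Sum>c<D. x c) / real D)^2) / real D + e)"
  unfolding layernorm_def Let_def by simp

lemma ln_inj:
  assumes D: "0 < D" and z: "z0 < D" "x z0 = 0" "y z0 = 0" and e: "0 < e"
    and eq: "\<forall>c<D. layernorm D e (\<lambda>_. 1) (\<lambda>_. 0) x c = layernorm D e (\<lambda>_. 1) (\<lambda>_. 0) y c"
  shows "\<forall>c<D. x c = y c"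
proof -
  define mx where "mx = (\<Sum>c<D. x c) / real D"
  define my where "my = (\<Sum>c<D. y c) / real D"
  define vx where "vx = (\<Sum>c<D. (x c - mx)^2) / real D"
  define vy where "vy = (\<Sum>c<D. (y c - my)^2) / real D"
  define sx where "sx = sqrt (vx + e)"
  define sy where "sy = sqrt (vy + e)"
  have vx0: "vx \<ge> 0" unfolding vx_def by (simp add: sum_nonneg)
  have vy0: "vy \<ge> 0" unfolding vy_def by (simp add: sum_nonneg)
  have sx0: "sx > 0" unfolding sx_def using vx0 e by simp
  have sy0: "sy > 0" unfolding sy_def using vy0 e by simp
  have sx2: "sx^2 = vx + e" unfolding sx_def using vx0 e by simp
  have sy2: "sy^2 = vy + e" unfolding sy_def using vy0 e by simp
  have L: "(x c - mx) / sx = (y c - my) / sy" if "c < D" for c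
    using eq that unfolding ln_eval mx_def my_def vx_def vy_def sx_def sy_def by simp
  have mm: "mx / sx = my / sy" using L[OF z(1)] z by simp
  define \<rho> where "\<rho> = sy / sx"
  have rho0: "\<rho> > 0" unfolding \<rho>_def using sx0 sy0 by simp
  have yx: "y c = \<rho> * x c" if "c < D" for c
  proof -
    have "x c / sx - mx / sx = y c / sy - my / sy" using L[OF that] by (simp add: diff_divide_distrib)
    then have "x c / sx = y c / sy" using mm by simp
    then show ?thesis unfolding \<rho>_def using sx0 sy0 by (simp add: field_simps)
  qed
  have my': "my = \<rho> * mx" unfolding my_def mx_def
    by (simp add: sum_distrib_left yx)
  have vy': "vy = \<rho>^2 * vx" unfolding vy_def vx_def
  proof -
    have "(\<Sum>c<D. (y c - my)^2) = (\<Sum>c<D. \<rho>^2 * (x c - mx)^2)"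
      proof (rule sum.cong)
      fix c assume "c \<in> {..<D}"
      then have "y c - my = \<rho> * (x c - mx)" using yx my' by (simp add: algebra_simps)
      then show "(y c - my)^2 = \<rho>^2 * (x c - mx)^2" by (simp add: power_mult_distrib)
    qed simp
    then show "(\<Sum>c<D. (y c - my)\<^sup>2) / real D = \<rho>\<^sup>2 * ((\<Sum>c<D. (x c - mx)\<^sup>2) / real D)"
      by (simp add: sum_distrib_left)
  qed
  have "sy = \<rho> * sx" unfolding \<rho>_def using sx0 by simp
  then have "sy^2 = \<rho>^2 * sx^2" by (simp add: power_mult_distrib)
  then have "\<rho>^2 * vx + e = \<rho>^2 * (vx + e)" using sy2 sx2 vy' by simp
  then have "\<rho>^2 * e = e" by (simp add: algebra_simps)
  then have "\<rho>^2 = 1" using e by simp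
  then have "\<rho> = 1" using rho0 using power2_eq_1_iff[of \<rho>] rho0 by auto
  then show ?thesis using yx by simp
qed

definition onehot :: "nat \<Rightarrow> vec" where
  "onehot c = (\<lambda>c'. if c' = c then 1 else 0)"

lemma sum_onehot: assumes "c < D" shows "(\<Sum>c'<D. h (onehot c c')) = h 1 + real (D - 1) * h 0"
proof -
  have "(\<Sum>c'<D. h (onehot c c')) = h (onehot c c) + (\<Sum>c'\<in>{..<D} - {c}. h (onehot c c'))"
    using assms by (simp add: sum.remove)
  also have "(\<Sum>c'\<in>{..<D} - {c}. h (onehot c c')) = (\<Sum>c'\<in>{..<D} - {c}. h 0)"
    by (rule sum.cong) (auto simp: onehot_def)
  finally show ?thesis using assms by (simp add: onehot_def)
qed

definition s1 :: "nat \<Rightarrow> real" where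
  "s1 D = sqrt (((1 - 1 / real D)^2 + real (D - 1) * (0 - 1 / real D)^2) / real D + 1)"

lemma ln_onehot: assumes "c < D"
  shows "layernorm D 1 (\<lambda>_. 1) (\<lambda>_. 0) (onehot c) c' = (onehot c c' - 1 / real D) / s1 D"
proof -
  have m: "(\<Sum>c<D. onehot c' c) = 1" if "c' < D" for c'
    using sum_onehot[OF that, of "\<lambda>x. x"] by simp
  show ?thesis unfolding ln_eval m[OF assms] s1_def
    using sum_onehot[OF assms, of "\<lambda>x. (x - 1 / real D)^2"] by simp
qed

lemma s1_pos: "s1 D > 0"
  unfolding s1_def by (intro real_sqrt_gt_zero add_nonneg_pos) auto

lemma digits_inj:
  fixes b :: nat
  shows "\<forall>f g. (\<forall>x. f x < b) \<longrightarrow> (\<forall>x. g x < b) \<longrightarrow> (\<Sum>x<n. f x * b^x) = (\<Sum>x<n. g x * b^x) \<longrightarrow> (\<forall>x<n. f x = g x)"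
proof (induction n)
  case 0
  then show ?case by simp
next
  case (Suc n)
  show ?case
  proof (intro allI impI)
    fix f g x assume f: "\<forall>x. f x < b" and g: "\<forall>x. g x < b"
      and eq: "(\<Sum>x<Suc n. f x * b^x) = (\<Sum>x<Suc n. g x * b^x)" and x: "x < Suc n"
    have sp: "(\<Sum>x<Suc n. h x * b^x) = h 0 + b * (\<Sum>x<n. h (Suc x) * b^x)" for h :: "nat \<Rightarrow> nat"
      unfolding sum.lessThan_Suc_shift by (simp add: sum_distrib_left algebra_simps)
    have e2: "f 0 + b * (\<Sum>x<n. f (Suc x) * b^x) = g 0 + b * (\<Sum>x<n. g (Suc x) * b^x)"
      using eq sp by metis
    have "f 0 = g 0"
      using arg_cong[OF e2, of "\<lambda>t. t mod b"] f g by simp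
    moreover have "(\<Sum>x<n. f (Suc x) * b^x) = (\<Sum>x<n. g (Suc x) * b^x)"
    proof -
      have b0: "b \<noteq> 0" using f by (metis not_less_zero)
      have "(f 0 + b * (\<Sum>x<n. f (Suc x) * b^x)) div b = (\<Sum>x<n. f (Suc x) * b^x)"
        using b0 f by (simp add: div_mult_self2)
      moreover have "(g 0 + b * (\<Sum>x<n. g (Suc x) * b^x)) div b = (\<Sum>x<n. g (Suc x) * b^x)"
        using b0 g by (simp add: div_mult_self2)
      ultimately show ?thesis using e2 by metis
    qed
    then have "\<forall>x<n. f (Suc x) = g (Suc x)"
      using Suc.IH[rule_format, where f="\<lambda>x. f (Suc x)" and g="\<lambda>x. g (Suc x)"] f g by blast
    ultimately show "f x = g x" using x by (cases x) auto
  qed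
qed

lemma sum_mset_pow:
  fixes b :: nat
  assumes "set_mset M \<subseteq> {..<n}"
  shows "sum_mset (image_mset (\<lambda>x. b^x) M) = (\<Sum>x<n. count M x * b^x)"
  using assms
proof (induction M)
  case empty
  then show ?case by simp
next
  case (add y M)
  then have y: "y < n" by auto
  have "(\<Sum>x<n. count (add_mset y M) x * b^x) = (\<Sum>x<n. count M x * b^x + (if x = y then b^x else 0))"
    by (rule sum.cong) (auto simp: algebra_simps)
  also have "\<dots> = (\<Sum>x<n. count M x * b^x) + b^y" using y by (simp add: sum.distrib)
  finally show ?case using add by simp
qed

lemma mset_digits:
  fixes b :: nat
  assumes "size M1 < b" "size M2 < b"
    and eq: "sum_mset (image_mset (\<lambda>x. b^x) M1) = sum_mset (image_mset (\<lambda>x. b^x) M2)"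
  shows "M1 = M2"
proof -
  obtain n where n: "set_mset M1 \<subseteq> {..<n}" "set_mset M2 \<subseteq> {..<n}"
  proof -
    have "finite (set_mset M1 \<union> set_mset M2)" by simp
    then obtain n where "\<forall>x \<in> set_mset M1 \<union> set_mset M2. x < n"
      by (meson finite_nat_set_iff_bounded)
    then show ?thesis using that by blast
  qed
  have c: "count M x < b" if "M = M1 \<or> M = M2" for M x
    using that assms(1,2) count_le_size[of M x] by auto
  have "(\<Sum>x<n. count M1 x * b^x) = (\<Sum>x<n. count M2 x * b^x)"
    using eq sum_mset_pow[OF n(1)] sum_mset_pow[OF n(2)] by simp
  then have "\<forall>x<n. count M1 x = count M2 x"
    using digits_inj[rule_format, where f="count M1" and g="count M2"] c by blast
  moreover have "count M1 x = 0" "count M2 x = 0" if "x \<ge> n" for x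
    using n that by (auto simp: count_eq_zero_iff)
  ultimately show ?thesis by (metis multiset_eqI not_le)
qed

lemma image_mset_inj_eq:
  assumes "inj_on f (set_mset A \<union> set_mset B)" "image_mset f A = image_mset f B"
  shows "A = B"
  using image_mset_eq_image_mset_plusD[of f A B "{#}"] assms by auto

lemma count_sum_if:
  assumes "finite A"
  shows "(\<Sum>i\<in>A. (if f i = c then 1 else 0 :: real)) = real (count (image_mset f (mset_set A)) c)"
  using assms by (induction A rule: finite_induct) auto

lemma block_apply: "block P Lr p k X i = (let Xh = (\<lambda>c. X i c + msa P Lr p k (\<lambda>i. layernorm (dim P) (eps P) (n1g Lr) (n1b Lr) (X i)) i c)
   in (\<lambda>c. Xh c + apply_mlp (dim P) (ffn Lr) (layernorm (dim P) (eps P) (n2g Lr) (n2b Lr) Xh) c))"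
  by (simp add: block_def Let_def)

lemma enc_inj: assumes "a1 < N" "a2 < N" "N * r1 + a1 = N * r2 + (a2::nat)" shows "r1 = r2 \<and> a1 = a2"
proof -
  have "(N * r1 + a1) mod N = a1" using assms(1) by simp
  moreover have "(N * r2 + a2) mod N = a2" using assms(2) by simp
  ultimately have a: "a1 = a2" using assms(3) by metis
  then have "N * r1 = N * r2" using assms(3) by simp
  then show ?thesis using a assms(1) by simp
qed

lemma ex_inj_bounded:
  assumes "finite A" "card A \<le> N"
  shows "\<exists>f::'a \<Rightarrow> nat. inj_on f A \<and> f ` A \<subseteq> {..<N}"
proof -
  obtain f n where f: "f ` A = {i::nat. i < n}" "inj_on f A" using finite_imp_inj_to_nat_seg[OF assms(1)] by blast
  then have "card A = n" using card_image[OF f(2)] by simp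
  then show ?thesis using f assms(2) by (intro exI[of _ f]) auto
qed

lemma sum_delta_mult: assumes "finite A" shows "(\<Sum>j\<in>A. (if c = j then 1 else 0) * f j) = (if c \<in> A then f c else (0::real))"
proof -
  have "(\<Sum>j\<in>A. (if c = j then 1 else 0) * f j) = (\<Sum>j\<in>A. (if c = j then f j else 0))"
    by (rule sum.cong) auto
  then show ?thesis using \<open>finite A\<close> by (simp add: sum.delta')
qed

lemma sum_delta_mult': "finite A \<Longrightarrow> (\<Sum>j\<in>A. (if j = c then 1 else 0) * f j) = (if c \<in> A then f c else (0::real))"
  using sum_delta_mult[of A c f] by (simp add: eq_commute)

lemma mv_app: "mv n M v i = (\<Sum>j<n. M i j * v j)" by (simp add: mv_def)

locale gsetup =
  fixes m :: nat and d :: "graph \<Rightarrow> nat \<Rightarrow> nat \<Rightarrow> real" and G H :: graph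
  assumes wfG: "wf_graph m G" and wfH: "wf_graph m H"
begin

definition "Idx = Sigma {G,H} (\<lambda>\<Gamma>. {..<gsize \<Gamma>})"
definition "N = m + gsize G + gsize H + 1"
definition "bb = Suc N"
definition "Cs l = (\<lambda>(\<Gamma>,i). wl_color d \<Gamma> l i) ` Idx"
definition "Ix l = (SOME f. inj_on f (Cs l) \<and> f ` Cs l \<subseteq> {..<N})"
definition "Dl = (\<lambda>(\<Gamma>,i,j). d \<Gamma> i j) ` {(\<Gamma>,i,j). \<Gamma> \<in> {G,H} \<and> i < gsize \<Gamma> \<and> j < gsize \<Gamma>}"
definition "rr = (SOME f::real \<Rightarrow> nat. inj_on f Dl)"
definition "LN x = layernorm (N+2) 1 (\<lambda>_. 1) (\<lambda>_. 0) x"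
definition "X0 \<Gamma> i = (\<lambda>c. if c < m then gattr \<Gamma> i ! c else 0)"
definition "J l \<Gamma> i = Ix l (wl_color d \<Gamma> l i)"
definition "zval l \<Gamma> i = (\<Sum>j<gsize \<Gamma>. (real bb ^ (N * rr (d \<Gamma> i j)) * (1 / real (gsize \<Gamma>))) * (real bb ^ J l \<Gamma> j / s1 (N+2)))"
definition "Xhat l \<Gamma> i = (case l of 0 \<Rightarrow> X0 \<Gamma> i | Suc l' \<Rightarrow> (\<lambda>c. onehot (J l' \<Gamma> i) c + (if c = Suc N then zval l' \<Gamma> i else 0)))"
definition "target l \<Gamma> i = (\<lambda>c. onehot (J l \<Gamma> i) c - Xhat l \<Gamma> i c)"
definition "ffnM l = (SOME M. \<forall>(\<Gamma>,i)\<in>Idx. apply_mlp (N+2) M (LN (Xhat l \<Gamma> i)) = target l \<Gamma> i)"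
definition WVm :: mat where "WVm = (\<lambda>r c'. if r = 0 then (if c' < N then real bb ^ c' else if c' = N then - (\<Sum>c<N. real bb ^ c) else 0) else 0)"
definition WOm :: "nat \<Rightarrow> mat" where "WOm l = (\<lambda>c r. if l = 0 then 0 else if c = Suc N then (if r = 0 then 1 else 0) else (0::real))"
definition "lay l = \<lparr>WQ = \<lambda>_ _ _. 0, WK = \<lambda>_ _ _. 0, WV = \<lambda>_. WVm, WO = \<lambda>_. WOm l,
   phi = \<lambda>_ v. real bb ^ (N * rr (v 0)), theta = \<lambda>_ _. 0, n1g = \<lambda>_. 1, n1b = \<lambda>_. 0,
   n2g = \<lambda>_. 1, n2b = \<lambda>_. 0, ffn = ffnM l\<rparr>"
definition "stemM = \<lparr>m_hid = 2, m_W1 = \<lambda>k j. if k = 0 then 1 else -1, m_b1 = \<lambda>_. 0,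
   m_W2 = \<lambda>c k. if k = 0 then 1 else -1, m_b2 = \<lambda>_. 0\<rparr>"
definition "idM = \<lparr>m_hid = N+2, m_W1 = \<lambda>k c. if k = c then 1 else 0, m_b1 = \<lambda>_. 0,
   m_W2 = \<lambda>c k. if c = k then 1 else 0, m_b2 = \<lambda>_. 0\<rparr>"
definition "PP L = \<lparr>dim = N+2, pdim = 1, nheads = 1, nlayers = Suc L, eps = 1,
   Win = \<lambda>c j. if c = j then 1 else 0, bin = \<lambda>_. 0, stem = stemM, layers = lay,
   readout = idM, outdim = N+2\<rparr>"

lemma fin_Idx: "finite Idx" unfolding Idx_def by auto

lemma card_Idx: "card Idx \<le> gsize G + gsize H"
proof -
  have "Idx \<subseteq> ({G} \<times> {..<gsize G}) \<union> ({H} \<times> {..<gsize H})" unfolding Idx_def by auto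
  then have "card Idx \<le> card (({G} \<times> {..<gsize G}) \<union> ({H} \<times> {..<gsize H}))"
    by (intro card_mono) auto
  also have "\<dots> \<le> card ({G} \<times> {..<gsize G}) + card ({H} \<times> {..<gsize H})" by (rule card_Un_le)
  finally show ?thesis by (simp add: card_cartesian_product)
qed

lemma Ix_prop: "inj_on (Ix l) (Cs l) \<and> Ix l ` Cs l \<subseteq> {..<N}"
proof -
  have "finite (Cs l)" unfolding Cs_def using fin_Idx by simp
  moreover have "card (Cs l) \<le> N" unfolding Cs_def N_def
    using card_image_le[OF fin_Idx, of "\<lambda>(\<Gamma>,i). wl_color d \<Gamma> l i"] card_Idx by linarith
  ultimately show ?thesis unfolding Ix_def using someI_ex[OF ex_inj_bounded] by blast
qed

lemma rr_inj: "inj_on rr Dl"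
proof -
  have "finite {(\<Gamma>,i,j). \<Gamma> \<in> {G,H} \<and> i < gsize \<Gamma> \<and> j < gsize \<Gamma>}"
  proof -
    have "{(\<Gamma>,i,j). \<Gamma> \<in> {G,H} \<and> i < gsize \<Gamma> \<and> j < gsize \<Gamma>} \<subseteq> {G,H} \<times> {..<gsize G + gsize H} \<times> {..<gsize G + gsize H}"
      by auto
    then show ?thesis by (rule finite_subset) auto
  qed
  then have "finite Dl" unfolding Dl_def by simp
  then show ?thesis unfolding rr_def using finite_imp_inj_to_nat_seg by (metis (mono_tags) someI_ex)
qed

lemma in_Idx: "(\<Gamma>,i) \<in> Idx \<longleftrightarrow> \<Gamma> \<in> {G,H} \<and> i < gsize \<Gamma>" unfolding Idx_def by auto

lemma col_in: "\<Gamma> \<in> {G,H} \<Longrightarrow> i < gsize \<Gamma> \<Longrightarrow> wl_color d \<Gamma> l i \<in> Cs l"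
  unfolding Cs_def Idx_def by force

lemma J_lt: "\<Gamma> \<in> {G,H} \<Longrightarrow> i < gsize \<Gamma> \<Longrightarrow> J l \<Gamma> i < N"
  unfolding J_def using Ix_prop col_in by blast

lemma N_pos: "0 < N" unfolding N_def by simp

lemma pos_emb_eq: "stem P = stemM \<Longrightarrow> pos_emb P d \<Gamma> i j 0 = d \<Gamma> i j"
  unfolding pos_emb_def apply_mlp_def stemM_def mv_def relu_def
  by (simp add: numeral_2_eq_2 lessThan_Suc)

lemma init_eq: "init_tokens m (PP L) \<Gamma> i = X0 \<Gamma> i"
  unfolding init_tokens_def PP_def X0_def
  by (rule ext) (simp add: sum_delta_mult)

lemma att_eq: "att_weight (PP L) (lay l) h p k Y i j = real bb ^ (N * rr (p i j 0)) * (1 / real k)"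
  unfolding att_weight_def PP_def lay_def mv_def dotp_def Let_def by simp

lemma mvWO: "mv (N+2) (WOm (Suc l)) v c = (if c = Suc N then v 0 else 0)"
  unfolding mv_app WOm_def by (simp add: sum_delta_mult')

lemma msa0: "msa (PP L) (lay 0) p k Y i c = 0"
  unfolding msa_def PP_def lay_def mv_def WOm_def by simp

lemma msaS: "msa (PP L) (lay (Suc l)) p k Y i c =
   (if c = Suc N then (\<Sum>j<k. (real bb ^ (N * rr (p i j 0)) * (1 / real k)) * (\<Sum>c'<N+2. WVm 0 c' * Y j c')) else 0)"
proof -
  have "msa (PP L) (lay (Suc l)) p k Y i c = (\<Sum>j<k. att_weight (PP L) (lay (Suc l)) 0 p k Y i j * mv (N+2) (WOm (Suc l)) (mv (N+2) WVm (Y j)) c)"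
    unfolding msa_def by (simp add: PP_def lay_def)
  also have "\<dots> = (\<Sum>j<k. (real bb ^ (N * rr (p i j 0)) * (1 / real k)) * (if c = Suc N then (\<Sum>c'<N+2. WVm 0 c' * Y j c') else 0))"
    unfolding att_eq mvWO mv_app[of "N+2" WVm] by simp
  finally show ?thesis by (auto simp: if_distrib cong: if_cong)
qed

lemma val_eq:
  assumes "a < N"
  shows "(\<Sum>c'<N+2. WVm 0 c' * LN (onehot a) c') = real bb ^ a / s1 (N+2)"
proof -
  have aD: "a < N+2" using assms by simp
  have LNv: "LN (onehot a) c' = (onehot a c' - 1 / real (N+2)) / s1 (N+2)" for c'
    unfolding LN_def using ln_onehot[OF aD] by simp
  have "(\<Sum>c'<N+2. WVm 0 c' * LN (onehot a) c') = (\<Sum>c'<N. real bb ^ c' * LN (onehot a) c') - (\<Sum>c<N. real bb ^ c) * LN (onehot a) N"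
    by (simp add: WVm_def lessThan_Suc numeral_2_eq_2)
  also have "\<dots> = (\<Sum>c'<N. real bb ^ c' * (LN (onehot a) c' - LN (onehot a) N))"
    by (simp add: sum_subtractf right_diff_distrib sum_distrib_left mult.commute)
  also have "\<dots> = (\<Sum>c'<N. (if c' = a then real bb ^ c' / s1 (N+2) else 0))"
  proof (rule sum.cong)
    fix c' assume "c' \<in> {..<N}"
    have hd: "LN (onehot a) c' - LN (onehot a) N = onehot a c' / s1 (N+2)"
    proof -
      have "onehot a N = 0" using assms by (simp add: onehot_def)
      then have "LN (onehot a) c' - LN (onehot a) N = (onehot a c' - 1 / real (N+2)) / s1 (N+2) - (0 - 1 / real (N+2)) / s1 (N+2)"
        unfolding LNv by simp
      also have "\<dots> = onehot a c' / s1 (N+2)" by (simp add: diff_divide_distrib)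
      finally show ?thesis .
    qed
    then show "real bb ^ c' * (LN (onehot a) c' - LN (onehot a) N) = (if c' = a then real bb ^ c' / s1 (N+2) else 0)"
      unfolding hd by (simp add: onehot_def)
  qed simp
  also have "\<dots> = real bb ^ a / s1 (N+2)" using assms by simp
  finally show ?thesis .
qed

end

context gsetup begin

lemma Gamma_wf: "\<Gamma> \<in> {G,H} \<Longrightarrow> wf_graph m \<Gamma>" using wfG wfH by auto

lemma gsize_lt_N: "\<Gamma> \<in> {G,H} \<Longrightarrow> gsize \<Gamma> < N" unfolding N_def by auto

lemma zval_eq: "zval l \<Gamma> i = real (\<Sum>j<gsize \<Gamma>. bb ^ (N * rr (d \<Gamma> i j) + J l \<Gamma> j)) / (real (gsize \<Gamma>) * s1 (N+2))"
proof -
  have "zval l \<Gamma> i = (\<Sum>j<gsize \<Gamma>. real bb ^ (N * rr (d \<Gamma> i j) + J l \<Gamma> j) / (real (gsize \<Gamma>) * s1 (N+2)))"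
    unfolding zval_def by (rule sum.cong) (simp_all add: power_add)
  also have "\<dots> = real (\<Sum>j<gsize \<Gamma>. bb ^ (N * rr (d \<Gamma> i j) + J l \<Gamma> j)) / (real (gsize \<Gamma>) * s1 (N+2))"
    by (simp add: sum_divide_distrib)
  finally show ?thesis .
qed

lemma Xhat_z0: assumes "(\<Gamma>,i) \<in> Idx" shows "Xhat l \<Gamma> i N = 0"
proof (cases l)
  case 0
  have "\<not> N < m" unfolding N_def by simp
  then show ?thesis using 0 by (simp add: Xhat_def X0_def)
next
  case (Suc l')
  have "J l' \<Gamma> i < N" using J_lt assms in_Idx by auto
  then show ?thesis using Suc by (simp add: Xhat_def onehot_def)
qed

lemma wl_step_eq:
  assumes G1: "\<Gamma> \<in> {G,H}" and G2: "\<Gamma>' \<in> {G,H}" and k: "gsize \<Gamma> = gsize \<Gamma>'"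
    and i: "i < gsize \<Gamma>" and i': "i' < gsize \<Gamma>'"
    and z: "zval l \<Gamma> i = zval l \<Gamma>' i'"
  shows "wl_color d \<Gamma> (Suc l) i = wl_color d \<Gamma>' (Suc l) i'"
proof -
  define k where "k = gsize \<Gamma>"
  have kpos: "0 < k" using i k_def by simp
  define e where "e \<Delta> a j = N * rr (d \<Delta> a j) + J l \<Delta> j" for \<Delta> a j
  define A where "A = (\<Sum>j<k. bb ^ e \<Gamma> i j)"
  define B where "B = (\<Sum>j<k. bb ^ e \<Gamma>' i' j)"
  have "real A / (real k * s1 (N+2)) = real B / (real k * s1 (N+2))"
    using z unfolding zval_eq e_def k_def A_def B_def using k by simp
  moreover have "real k * s1 (N+2) \<noteq> 0" using kpos s1_pos[of "N+2"] by simp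
  ultimately have "real A = real B" by simp
  then have se: "(\<Sum>j<k. bb ^ e \<Gamma> i j) = (\<Sum>j<k. bb ^ e \<Gamma>' i' j)"
    unfolding A_def B_def by (simp only: of_nat_eq_iff)
  define enc where "enc = (\<lambda>(\<delta>::real, \<gamma>). N * rr \<delta> + Ix l \<gamma>)"
  define MP where "MP \<Delta> a = image_mset (\<lambda>u. (d \<Delta> a u, wl_color d \<Delta> l u)) (mset_set {..<k})" for \<Delta> a
  have em: "image_mset (e \<Delta> a) (mset_set {..<k}) = image_mset enc (MP \<Delta> a)" for \<Delta> a
    unfolding MP_def enc_def e_def J_def by (simp add: multiset.map_comp comp_def)
  have sm: "(\<Sum>j<k. bb ^ e \<Delta> a j) = sum_mset (image_mset (\<lambda>x. bb^x) (image_mset (e \<Delta> a) (mset_set {..<k})))" for \<Delta> a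
    by (simp add: sum_unfold_sum_mset multiset.map_comp comp_def)
  have sz: "size (image_mset (e \<Delta> a) (mset_set {..<k})) < bb" for \<Delta> a
    using gsize_lt_N[OF G1] unfolding bb_def k_def by simp
  have "image_mset (e \<Gamma> i) (mset_set {..<k}) = image_mset (e \<Gamma>' i') (mset_set {..<k})"
    using mset_digits[OF sz sz] se sm by metis
  then have eq1: "image_mset enc (MP \<Gamma> i) = image_mset enc (MP \<Gamma>' i')" using em by simp
  have sub: "set_mset (MP \<Delta> a) \<subseteq> Dl \<times> Cs l" if "\<Delta> \<in> {G,H}" "a < gsize \<Delta>" "gsize \<Delta> = k" for \<Delta> a
  proof
    fix x assume "x \<in> set_mset (MP \<Delta> a)"
    then obtain u where u: "u < k" "x = (d \<Delta> a u, wl_color d \<Delta> l u)" unfolding MP_def by auto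
    have "d \<Delta> a u \<in> Dl" unfolding Dl_def using that u by (auto intro!: image_eqI[of _ _ "(\<Delta>,a,u)"])
    moreover have "wl_color d \<Delta> l u \<in> Cs l" using col_in that u by simp
    ultimately show "x \<in> Dl \<times> Cs l" using u by simp
  qed
  have injenc: "inj_on enc (Dl \<times> Cs l)"
  proof (rule inj_onI)
    fix x y assume x: "x \<in> Dl \<times> Cs l" and y: "y \<in> Dl \<times> Cs l" and exy: "enc x = enc y"
    obtain x1 x2 where xx: "x = (x1,x2)" by (cases x) simp
    obtain y1 y2 where yy: "y = (y1,y2)" by (cases y) simp
    have m: "x1 \<in> Dl" "x2 \<in> Cs l" "y1 \<in> Dl" "y2 \<in> Cs l" using x y xx yy by auto
    have lt: "Ix l x2 < N" "Ix l y2 < N" using Ix_prop m by auto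
    have "N * rr x1 + Ix l x2 = N * rr y1 + Ix l y2" using exy unfolding xx yy enc_def by simp
    then have r: "rr x1 = rr y1 \<and> Ix l x2 = Ix l y2" using enc_inj[OF lt] by blast
    have "x1 = y1" using r m rr_inj by (meson inj_onD)
    moreover have "x2 = y2" using r m Ix_prop by (meson inj_onD)
    ultimately show "x = y" using xx yy by simp
  qed
  have s1: "set_mset (MP \<Gamma> i) \<subseteq> Dl \<times> Cs l" using sub[OF G1 i] k_def by simp
  have s2: "set_mset (MP \<Gamma>' i') \<subseteq> Dl \<times> Cs l" using sub[OF G2 i'] k k_def by simp
  have "inj_on enc (set_mset (MP \<Gamma> i) \<union> set_mset (MP \<Gamma>' i'))"
    using inj_on_subset[OF injenc] s1 s2 by (meson Un_least)
  then have "MP \<Gamma> i = MP \<Gamma>' i'" using image_mset_inj_eq eq1 by blast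
  then show ?thesis using k unfolding MP_def k_def by simp
qed

lemma Xhat_wd:
  assumes hyp: "0 < l \<longrightarrow> gsize G = gsize H"
    and in1: "(\<Gamma>,i) \<in> Idx" and in2: "(\<Gamma>',i') \<in> Idx"
    and ag: "\<forall>c<N+2. Xhat l \<Gamma> i c = Xhat l \<Gamma>' i' c"
  shows "target l \<Gamma> i = target l \<Gamma>' i'"
proof (cases l)
  case 0
  have G1: "\<Gamma> \<in> {G,H}" "i < gsize \<Gamma>" and G2: "\<Gamma>' \<in> {G,H}" "i' < gsize \<Gamma>'" using in1 in2 in_Idx by auto
  have len: "length (gattr \<Gamma> i) = m" "length (gattr \<Gamma>' i') = m"
    using Gamma_wf[OF G1(1)] Gamma_wf[OF G2(1)] G1 G2 unfolding wf_graph_def by auto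
  have "gattr \<Gamma> i ! c = gattr \<Gamma>' i' ! c" if "c < m" for c
    using ag[rule_format, of c] that 0 unfolding Xhat_def X0_def N_def by simp
  then have ga: "gattr \<Gamma> i = gattr \<Gamma>' i'" using len by (simp add: nth_equalityI)
  have w0: "wl_color d \<Gamma> 0 i = wl_color d \<Gamma>' 0 i'" using ga by simp
  have x0: "Xhat 0 \<Gamma> i = Xhat 0 \<Gamma>' i'" unfolding Xhat_def X0_def ga by simp
  show ?thesis unfolding target_def J_def 0 w0 x0 by simp
next
  case (Suc l')
  have G1: "\<Gamma> \<in> {G,H}" "i < gsize \<Gamma>" and G2: "\<Gamma>' \<in> {G,H}" "i' < gsize \<Gamma>'" using in1 in2 in_Idx by auto
  have k: "gsize \<Gamma> = gsize \<Gamma>'" using hyp Suc G1 G2 by auto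
  define a where "a = J l' \<Gamma> i"
  define a' where "a' = J l' \<Gamma>' i'"
  have aN: "a < N" "a' < N" using J_lt G1 G2 a_def a'_def by auto
  have XS: "Xhat l \<Delta> b = (\<lambda>c. onehot (J l' \<Delta> b) c + (if c = Suc N then zval l' \<Delta> b else 0))" for \<Delta> b
    unfolding Xhat_def Suc by simp
  have "onehot a a = onehot a' a" using ag[rule_format, of a] aN unfolding XS a_def a'_def by simp
  then have aa: "a = a'" by (simp add: onehot_def split: if_splits)
  have "zval l' \<Gamma> i = zval l' \<Gamma>' i'" using ag[rule_format, of "Suc N"] aN unfolding XS a_def a'_def
    by (simp add: onehot_def)
  then have z: "zval l' \<Gamma> i = zval l' \<Gamma>' i'" .
  have w: "wl_color d \<Gamma> (Suc l') i = wl_color d \<Gamma>' (Suc l') i'"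
    using wl_step_eq[OF G1(1) G2(1) k G1(2) G2(2) z] .
  have "Xhat l \<Gamma> i = Xhat l \<Gamma>' i'" unfolding XS z using aa a_def a'_def by simp
  then show ?thesis unfolding target_def J_def using w Suc by simp
qed

lemma ffn_prop:
  assumes hyp: "0 < l \<longrightarrow> gsize G = gsize H" and in1: "(\<Gamma>,i) \<in> Idx"
  shows "apply_mlp (N+2) (ffnM l) (LN (Xhat l \<Gamma> i)) = target l \<Gamma> i"
proof -
  have wd: "\<forall>\<iota>\<in>Idx. \<forall>\<iota>'\<in>Idx. (\<forall>c<N+2. (case \<iota> of (\<Gamma>,i) \<Rightarrow> LN (Xhat l \<Gamma> i)) c = (case \<iota>' of (\<Gamma>,i) \<Rightarrow> LN (Xhat l \<Gamma> i)) c)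
      \<longrightarrow> (case \<iota> of (\<Gamma>,i) \<Rightarrow> target l \<Gamma> i) = (case \<iota>' of (\<Gamma>,i) \<Rightarrow> target l \<Gamma> i)"
  proof (intro ballI impI)
    fix \<iota> \<iota>' assume a1: "\<iota> \<in> Idx" and a2: "\<iota>' \<in> Idx"
      and ag: "\<forall>c<N+2. (case \<iota> of (\<Gamma>,i) \<Rightarrow> LN (Xhat l \<Gamma> i)) c = (case \<iota>' of (\<Gamma>,i) \<Rightarrow> LN (Xhat l \<Gamma> i)) c"
    obtain \<Gamma>1 i1 where ii1: "\<iota> = (\<Gamma>1,i1)" by (cases \<iota>)
    obtain \<Gamma>2 i2 where ii2: "\<iota>' = (\<Gamma>2,i2)" by (cases \<iota>')
    have a1': "(\<Gamma>1,i1) \<in> Idx" using a1 ii1 by simp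
    have a2': "(\<Gamma>2,i2) \<in> Idx" using a2 ii2 by simp
    have ag': "\<forall>c<N+2. layernorm (N+2) 1 (\<lambda>_. 1) (\<lambda>_. 0) (Xhat l \<Gamma>1 i1) c = layernorm (N+2) 1 (\<lambda>_. 1) (\<lambda>_. 0) (Xhat l \<Gamma>2 i2) c"
      using ag unfolding ii1 ii2 LN_def by simp
    have "\<forall>c<N+2. Xhat l \<Gamma>1 i1 c = Xhat l \<Gamma>2 i2 c"
      by (rule ln_inj[OF _ _ Xhat_z0[OF a1'] Xhat_z0[OF a2'] _ ag']) simp_all
    then have "target l \<Gamma>1 i1 = target l \<Gamma>2 i2" by (rule Xhat_wd[OF hyp a1' a2'])
    then show "(case \<iota> of (\<Gamma>,i) \<Rightarrow> target l \<Gamma> i) = (case \<iota>' of (\<Gamma>,i) \<Rightarrow> target l \<Gamma> i)"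
      unfolding ii1 ii2 by simp
  qed
  obtain M where M: "\<forall>\<iota>\<in>Idx. apply_mlp (N+2) M ((case \<iota> of (\<Gamma>,i) \<Rightarrow> LN (Xhat l \<Gamma> i))) = (case \<iota> of (\<Gamma>,i) \<Rightarrow> target l \<Gamma> i)"
    using mlp_interp[OF fin_Idx wd] by blast
  have ex: "\<exists>M. \<forall>(\<Gamma>,i)\<in>Idx. apply_mlp (N+2) M (LN (Xhat l \<Gamma> i)) = target l \<Gamma> i"
  proof (intro exI[of _ M] ballI)
    fix \<iota> assume "\<iota> \<in> Idx"
    note Mi = M[rule_format, OF this]
    show "case \<iota> of (\<Gamma>,i) \<Rightarrow> apply_mlp (N+2) M (LN (Xhat l \<Gamma> i)) = target l \<Gamma> i"
      using Mi by (cases \<iota>) simp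
  qed
  from someI_ex[OF ex] have "\<forall>(\<Gamma>,i)\<in>Idx. apply_mlp (N+2) (ffnM l) (LN (Xhat l \<Gamma> i)) = target l \<Gamma> i"
    unfolding ffnM_def .
  then show ?thesis using in1 by fast
qed

end

context gsetup begin

lemma step:
  assumes in1: "(\<Gamma>,i) \<in> Idx" and hyp: "0 < l \<longrightarrow> gsize G = gsize H"
    and Xh: "\<And>c. tokens m (PP L) d \<Gamma> l i c + msa (PP L) (lay l) (pos_emb (PP L) d \<Gamma>) (gsize \<Gamma>)
        (\<lambda>j. layernorm (N+2) 1 (\<lambda>_. 1) (\<lambda>_. 0) (tokens m (PP L) d \<Gamma> l j)) i c = Xhat l \<Gamma> i c"
  shows "tokens m (PP L) d \<Gamma> (Suc l) i = onehot (J l \<Gamma> i)"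
proof -
  have P: "layers (PP L) l = lay l" "dim (PP L) = N+2" "eps (PP L) = 1" "n1g (lay l) = (\<lambda>_. 1)"
    "n1b (lay l) = (\<lambda>_. 0)" "n2g (lay l) = (\<lambda>_. 1)" "n2b (lay l) = (\<lambda>_. 0)" "ffn (lay l) = ffnM l"
    by (simp_all add: PP_def lay_def)
  have XX: "(\<lambda>c. tokens m (PP L) d \<Gamma> l i c + msa (PP L) (lay l) (pos_emb (PP L) d \<Gamma>) (gsize \<Gamma>)
        (\<lambda>j. layernorm (N+2) 1 (\<lambda>_. 1) (\<lambda>_. 0) (tokens m (PP L) d \<Gamma> l j)) i c) = Xhat l \<Gamma> i"
    using Xh by (rule ext)
  have "tokens m (PP L) d \<Gamma> (Suc l) i = block (PP L) (lay l) (pos_emb (PP L) d \<Gamma>) (gsize \<Gamma>) (tokens m (PP L) d \<Gamma> l) i"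
    by (simp add: P)
  also have "\<dots> = (\<lambda>c. Xhat l \<Gamma> i c + apply_mlp (N+2) (ffnM l) (LN (Xhat l \<Gamma> i)) c)"
    unfolding block_apply Let_def P XX LN_def ..
  also have "\<dots> = onehot (J l \<Gamma> i)"
    unfolding ffn_prop[OF hyp in1] target_def by simp
  finally show ?thesis .
qed

lemma tokens_oh:
  assumes "0 < l \<longrightarrow> gsize G = gsize H" and G1: "\<Gamma> \<in> {G,H}"
  shows "\<forall>i<gsize \<Gamma>. tokens m (PP L) d \<Gamma> (Suc l) i = onehot (J l \<Gamma> i)"
  using assms(1)
proof (induction l)
  case 0
  show ?case
  proof (intro allI impI)
    fix i assume i: "i < gsize \<Gamma>"
    then have in1: "(\<Gamma>,i) \<in> Idx" using G1 in_Idx by simp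
    show "tokens m (PP L) d \<Gamma> (Suc 0) i = onehot (J 0 \<Gamma> i)"
      by (rule step[OF in1 0]) (simp add: msa0 init_eq Xhat_def)
  qed
next
  case (Suc l)
  have hyp: "gsize G = gsize H" using Suc.prems by simp
  have IH: "\<forall>i<gsize \<Gamma>. tokens m (PP L) d \<Gamma> (Suc l) i = onehot (J l \<Gamma> i)" using Suc.IH hyp by simp
  show ?case
  proof (intro allI impI)
    fix i assume i: "i < gsize \<Gamma>"
    then have in1: "(\<Gamma>,i) \<in> Idx" using G1 in_Idx by simp
    show "tokens m (PP L) d \<Gamma> (Suc (Suc l)) i = onehot (J (Suc l) \<Gamma> i)"
    proof (rule step[OF in1 Suc.prems])
      fix c
      define k where "k = gsize \<Gamma>"
      have sum: "(\<Sum>j<k. (real bb ^ (N * rr (pos_emb (PP L) d \<Gamma> i j 0)) * (1 / real k)) *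
          (\<Sum>c'<N+2. WVm 0 c' * layernorm (N+2) 1 (\<lambda>_. 1) (\<lambda>_. 0) (tokens m (PP L) d \<Gamma> (Suc l) j) c'))
          = zval l \<Gamma> i"
        unfolding zval_def k_def
      proof (rule sum.cong)
        fix j assume j: "j \<in> {..<gsize \<Gamma>}"
        have "pos_emb (PP L) d \<Gamma> i j 0 = d \<Gamma> i j" by (rule pos_emb_eq) (simp add: PP_def)
        moreover have "(\<Sum>c'<N+2. WVm 0 c' * layernorm (N+2) 1 (\<lambda>_. 1) (\<lambda>_. 0) (tokens m (PP L) d \<Gamma> (Suc l) j) c')
             = real bb ^ J l \<Gamma> j / s1 (N+2)"
          using IH j val_eq[OF J_lt[OF G1, of j l]] unfolding LN_def by simp
        ultimately show "(real bb ^ (N * rr (pos_emb (PP L) d \<Gamma> i j 0)) * (1 / real (gsize \<Gamma>))) *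
          (\<Sum>c'<N+2. WVm 0 c' * layernorm (N+2) 1 (\<lambda>_. 1) (\<lambda>_. 0) (tokens m (PP L) d \<Gamma> (Suc l) j) c')
          = (real bb ^ (N * rr (d \<Gamma> i j)) * (1 / real (gsize \<Gamma>))) * (real bb ^ J l \<Gamma> j / s1 (N+2))"
          by simp
      qed simp
      show "tokens m (PP L) d \<Gamma> (Suc l) i c + msa (PP L) (lay (Suc l)) (pos_emb (PP L) d \<Gamma>) (gsize \<Gamma>)
        (\<lambda>j. layernorm (N+2) 1 (\<lambda>_. 1) (\<lambda>_. 0) (tokens m (PP L) d \<Gamma> (Suc l) j)) i c = Xhat (Suc l) \<Gamma> i c"
        unfolding msaS using sum IH i unfolding k_def by (simp add: Xhat_def)
    qed
  qed
qed

lemma idM_apply: assumes "c < N+2" "x c \<ge> 0" shows "apply_mlp (N+2) idM x c = x c"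
proof -
  have inner: "(\<Sum>c'<N+2. (if k = c' then 1 else 0) * x c') = (if k < N+2 then x k else 0)" for k
    using sum_delta_mult[of "{..<N+2}" k x] by simp
  have "apply_mlp (N+2) idM x c = (\<Sum>k<N+2. (if c = k then 1 else 0) * max 0 (\<Sum>c'<N+2. (if k = c' then 1 else 0) * x c'))"
    unfolding apply_mlp_def idM_def mv_app relu_def by simp
  also have "\<dots> = max 0 (\<Sum>c'<N+2. (if c = c' then 1 else 0) * x c')"
    using sum_delta_mult[of "{..<N+2}" c "\<lambda>k. max 0 (\<Sum>c'<N+2. (if k = c' then 1 else 0) * x c')"] assms(1) by simp
  also have "\<dots> = x c" using inner[of c] assms by simp
  finally show ?thesis .
qed

lemma out_eq:
  assumes hyp: "0 < L \<longrightarrow> gsize G = gsize H" and G1: "\<Gamma> \<in> {G,H}" and c: "c < N+2"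
  shows "ppgt_output m (PP L) d \<Gamma> c = real (count (image_mset (J L \<Gamma>) (mset_set {..<gsize \<Gamma>})) c)"
proof -
  have s: "(\<Sum>i<gsize \<Gamma>. tokens m (PP L) d \<Gamma> (Suc L) i c') = real (count (image_mset (J L \<Gamma>) (mset_set {..<gsize \<Gamma>})) c')" for c'
  proof -
    have "(\<Sum>i<gsize \<Gamma>. tokens m (PP L) d \<Gamma> (Suc L) i c') = (\<Sum>i<gsize \<Gamma>. (if J L \<Gamma> i = c' then 1 else 0))"
    proof (rule sum.cong)
      fix i assume "i \<in> {..<gsize \<Gamma>}"
      then have ti: "tokens m (PP L) d \<Gamma> (Suc L) i = onehot (J L \<Gamma> i)" using tokens_oh[OF hyp G1] by blast
      show "tokens m (PP L) d \<Gamma> (Suc L) i c' = (if J L \<Gamma> i = c' then 1 else 0)"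
        unfolding ti onehot_def by auto
    qed simp
    also have "\<dots> = real (count (image_mset (J L \<Gamma>) (mset_set {..<gsize \<Gamma>})) c')"
      by (rule count_sum_if) simp
    finally show ?thesis .
  qed
  have "ppgt_output m (PP L) d \<Gamma> c = apply_mlp (N+2) idM (\<lambda>c. \<Sum>i<gsize \<Gamma>. tokens m (PP L) d \<Gamma> (Suc L) i c) c"
    unfolding ppgt_output_def by (simp add: PP_def)
  also have "\<dots> = (\<Sum>i<gsize \<Gamma>. tokens m (PP L) d \<Gamma> (Suc L) i c)"
    by (rule idM_apply[OF c]) (unfold s, simp)
  also have "\<dots> = real (count (image_mset (J L \<Gamma>) (mset_set {..<gsize \<Gamma>})) c)" by (rule s)
  finally show ?thesis .
qed

lemma main:
  assumes "gdwl_distinguishes d G H"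
  shows "\<exists>P. valid_ppgt P \<and> ppgt_distinguishes m d P G H"
proof -
  obtain L where L: "wl_graph_color d G L \<noteq> wl_graph_color d H L" and hL: "0 < L \<longrightarrow> gsize G = gsize H"
  proof (cases "gsize G = gsize H")
    case True
    then show ?thesis using that assms unfolding gdwl_distinguishes_def by blast
  next
    case False
    have "size (wl_graph_color d G 0) \<noteq> size (wl_graph_color d H 0)"
      using False unfolding wl_graph_color_def by simp
    then have "wl_graph_color d G 0 \<noteq> wl_graph_color d H 0" by metis
    then show ?thesis using that[of 0] by simp
  qed
  define MG where "MG = image_mset (J L G) (mset_set {..<gsize G})"
  define MH where "MH = image_mset (J L H) (mset_set {..<gsize H})"
  have MGe: "MG = image_mset (Ix L) (wl_graph_color d G L)"
    unfolding MG_def wl_graph_color_def J_def by (simp add: multiset.map_comp comp_def)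
  have MHe: "MH = image_mset (Ix L) (wl_graph_color d H L)"
    unfolding MH_def wl_graph_color_def J_def by (simp add: multiset.map_comp comp_def)
  have subs: "set_mset (wl_graph_color d \<Gamma> L) \<subseteq> Cs L" if "\<Gamma> \<in> {G,H}" for \<Gamma>
    unfolding wl_graph_color_def using col_in[OF that] by auto
  have "MG \<noteq> MH"
  proof
    assume "MG = MH"
    then have eqI: "image_mset (Ix L) (wl_graph_color d G L) = image_mset (Ix L) (wl_graph_color d H L)"
      using MGe MHe by simp
    have injI: "inj_on (Ix L) (set_mset (wl_graph_color d G L) \<union> set_mset (wl_graph_color d H L))"
    proof (rule inj_on_subset[OF conjunct1[OF Ix_prop]])
      show "set_mset (wl_graph_color d G L) \<union> set_mset (wl_graph_color d H L) \<subseteq> Cs L"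
        using subs[of G] subs[of H] by blast
    qed
    have "wl_graph_color d G L = wl_graph_color d H L" by (rule image_mset_inj_eq[OF injI eqI])
    then show False using L by simp
  qed
  then obtain c where c: "count MG c \<noteq> count MH c" by (meson multiset_eqI)
  have cN: "c < N"
  proof (rule ccontr)
    assume "\<not> c < N"
    then have "count MG c = 0" "count MH c = 0"
      unfolding MG_def MH_def using J_lt by (auto simp: count_eq_zero_iff)
    then show False using c by simp
  qed
  have "ppgt_output m (PP L) d G c \<noteq> ppgt_output m (PP L) d H c"
    using out_eq[OF hL, of G c] out_eq[OF hL, of H c] cN c unfolding MG_def MH_def by simp
  moreover have "c < outdim (PP L)" using cN by (simp add: PP_def)
  ultimately have "ppgt_distinguishes m d (PP L) G H" unfolding ppgt_distinguishes_def by blast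
  moreover have "valid_ppgt (PP L)" unfolding valid_ppgt_def PP_def by simp
  ultimately show ?thesis by blast
qed

end

theorem proposition1:
  fixes m n :: nat and d :: "graph \<Rightarrow> nat \<Rightarrow> nat \<Rightarrow> real" and G H :: graph
  assumes "gen_dist m d"
    and "wf_graph m G" and "wf_graph m H"
    and "gsize G \<le> n" and "gsize H \<le> n"
    and "gdwl_distinguishes d G H"
  shows "\<exists>P. valid_ppgt P \<and> ppgt_distinguishes m d P G H"
proof -
  interpret gsetup m d G H using assms(2,3) by unfold_locales
  show ?thesis using main assms(6) by blast
qed

end
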